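(* Let $\mathbf{z}:\mathcal{U}\to\mathcal{Z}$ be a $C^1$ diffeomorphism onto a convex set $\mathcal{Z}$ with inverse $\mathbf{z}\mapsto\mathbf{u}(\mathbf{z})$, and let $\Phi(s;\mathbf{u}_L,\mathbf{u}_R):=\mathbf{u}\big(\mathbf{z}_L+s[\![\mathbf{z}]\!]\big)$ be the path that is linear in $\mathbf{z}$. Let $\bar{\mathbf{B}}^\pm:\mathcal{U}\times\mathcal{U}\to\mathbb{R}^{n\times n}$ be $C^1$ with (a) $2\bar{\mathbf{B}}^\pm(\mathbf{u},\mathbf{u})=\mathbf{B}(\mathbf{u})\,\mathbf{u}_{\mathbf{z}}(\mathbf{z}(\mathbf{u}))$; (b) $\bar{\mathbf{B}}^-(\mathbf{u}_R,\mathbf{u}_L)=\bar{\mathbf{B}}^+(\mathbf{u}_L,\mathbf{u}_R)$; (c) $\bar{\mathbf{B}}^-(\mathbf{u}_L,\mathbf{u}_R)+\bar{\mathbf{B}}^+(\mathbf{u}_L,\mathbf{u}_R)=\int_0^1\mathbf{B}(\Phi(s))\,\mathbf{u}_{\mathbf{z}}(\mathbf{z}_L+s[\![\mathbf{z}]\!])\,ds$; and let $\mathbf{f}^*:\mathcal{U}\times\mathcal{U}\to\mathbb{R}^n$ be $C^1$, consistent ($\mathbf{f}^*(\mathbf{u},\mathbf{u})=\mathbf{f}(\mathbf{u})$) and symmetric ($\mathbf{f}^*(\mathbf{u}_L,\mathbf{u}_R)=\mathbf{f}^*(\mathbf{u}_R,\mathbf{u}_L)$), such that for all $\mathbf{u}_L,\mathbf{u}_R$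 (d) $[\![q-\mathbf{w}^T\mathbf{f}]\!]=\mathbf{w}_R^T\bar{\mathbf{B}}^+(\mathbf{u}_L,\mathbf{u}_R)[\![\mathbf{z}]\!]+\mathbf{w}_L^T\bar{\mathbf{B}}^-(\mathbf{u}_L,\mathbf{u}_R)[\![\mathbf{z}]\!]-[\![\mathbf{w}]\!]^T\mathbf{f}^*(\mathbf{u}_L,\mathbf{u}_R)$. Then the fluctuations $$\mathbf{D}^-(\mathbf{u}_L,\mathbf{u}_R)=\bar{\mathbf{B}}^-(\mathbf{u}_L,\mathbf{u}_R)[\![\mathbf{z}]\!]+\mathbf{f}^*(\mathbf{u}_L,\mathbf{u}_R)-\mathbf{f}(\mathbf{u}_L),\qquad \mathbf{D}^+(\mathbf{u}_L,\mathbf{u}_R)=\bar{\mathbf{B}}^+(\mathbf{u}_L,\mathbf{u}_R)[\![\mathbf{z}]\!]+\mathbf{f}(\mathbf{u}_R)-\mathbf{f}^*(\mathbf{u}_L,\mathbf{u}_R)$$ are entropy conservative fluctuations, i.e. satisfy (C1)–(C5) with respect to the path $\Phi$.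
   Context: System: $\mathbf{u}_t+\mathbf{f}(\mathbf{u})_x+\mathbf{B}(\mathbf{u})\mathbf{u}_x=0$, $\mathbf{u}\in\mathcal{U}\subset\mathbb{R}^n$, with $C^1$ flux $\mathbf{f}$ and continuous $\mathbf{B}$, generalized Jacobian $\mathbf{A}:=\mathbf{f}_{\mathbf{u}}+\mathbf{B}$. Entropy pair: strictly convex $C^2$ $S$ and entropy flux $q$ with $q_{\mathbf{u}}=\mathbf{w}^T(\mathbf{f}_{\mathbf{u}}+\mathbf{B})$, $\mathbf{w}(\mathbf{u}):=S_{\mathbf{u}}(\mathbf{u})$. Notation: $[\![\cdot]\!]=(\cdot)_R-(\cdot)_L$; $\mathbf{w}_L=\mathbf{w}(\mathbf{u}_L)$, $\mathbf{z}_L=\mathbf{z}(\mathbf{u}_L)$, $q_L=q(\mathbf{u}_L)$, etc. EC fluctuation conditions, for all $\mathbf{u},\mathbf{u}_L,\mathbf{u}_R$ and a given family of paths $\Phi(s;\mathbf{u}_L,\mathbf{u}_R)$: (C1) $\mathbf{D}^\pm(\mathbf{u},\mathbf{u})=0$; (C2) $\mathbf{D}^-(\mathbf{u}_L,\mathbf{u}_R)+\mathbf{D}^+(\mathbf{u}_L,\mathbf{u}_R)=\int_0^1\mathbf{A}(\Phi(s;\mathbf{u}_L,\mathbf{u}_R))\partial_s\Phi(s;\mathbf{u}_L,\mathbf{u}_R)\,ds$; (C3) $\mathbf{D}^-(\mathbf{u}_L,\mathbf{u}_R)+\mathbf{D}^+(\mathbf{u}_R,\mathbf{u}_L)=0$;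 (C4) $\mathbf{w}_L^T\mathbf{D}^-(\mathbf{u}_L,\mathbf{u}_R)+\mathbf{w}_R^T\mathbf{D}^+(\mathbf{u}_L,\mathbf{u}_R)=q_R-q_L$; (C5) $\frac{\partial\mathbf{D}^-(\mathbf{u}_L,\mathbf{u}_R)}{\partial\mathbf{u}_R}\big|_{\mathbf{u}_R=\mathbf{u}_L}=\frac12\mathbf{A}(\mathbf{u}_L)$. *)

theory Defs
  imports "HOL-Analysis.Analysis"
begin

definition strict_convex_on :: "'a::real_vector set \<Rightarrow> ('a \<Rightarrow> real) \<Rightarrow> bool" where
  "strict_convex_on A F \<longleftrightarrow>
     (\<forall>x\<in>A. \<forall>y\<in>A. \<forall>t::real. x \<noteq> y \<and> 0 < t \<and> t < 1 \<longrightarrow>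
        F ((1 - t) *\<^sub>R x + t *\<^sub>R y) < (1 - t) * F x + t * F y)"

definition C1_on :: "'a::real_normed_vector set \<Rightarrow> ('a \<Rightarrow> 'b::real_normed_vector) \<Rightarrow> bool" where
  "C1_on A F \<longleftrightarrow>
     (\<exists>F'. (\<forall>x\<in>A. (F has_derivative blinfun_apply (F' x)) (at x)) \<and> continuous_on A F')"

definition jac :: "(real^'n \<Rightarrow> real^'m) \<Rightarrow> real^'n \<Rightarrow> real^'n^'m" where
  "jac F x = matrix (frechet_derivative F (at x))"

end

theory Submission
  imports Defs
begin

lemma bb_mv: "bounded_bilinear (\<lambda>(A::real^'n^'m) (x::real^'n). A *v x)"
proof -
  have "bilinear (\<lambda>(A::real^'n^'m) (x::real^'n). A *v x)"
    unfolding bilinear_def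
    by (auto intro!: linearI simp: matrix_vector_mult_add_rdistrib matrix_vector_mult_scaleR
        matrix_vector_right_distrib scaleR_matrix_vector_assoc)
  then show ?thesis by (simp add: bilinear_conv_bounded_bilinear)
qed
lemma bb_mm: "bounded_bilinear (\<lambda>(A::real^'n^'m) (B::real^'k^'n). A ** B)"
proof -
  have "bilinear (\<lambda>(A::real^'n^'m) (B::real^'k^'n). A ** B)"
    unfolding bilinear_def
    by (auto intro!: linearI simp: matrix_matrix_mult_def vec_eq_iff sum.distrib algebra_simps scaleR_sum_right sum_distrib_left)
  then show ?thesis by (simp add: bilinear_conv_bounded_bilinear)
qed
lemma cont_matrix:
  assumes "continuous_on S F"
  shows "continuous_on S (\<lambda>x. matrix (blinfun_apply (F x)) :: real^'n^'m)"
  unfolding matrix_def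
  by (intro continuous_on_vec_lambda continuous_on_component blinfun.continuous_on assms continuous_on_const)
theorem theorem3:
  fixes U Z :: "(real^'n) set"
    and f :: "real^'n \<Rightarrow> real^'n"
    and B :: "real^'n \<Rightarrow> real^'n^'n"
    and S q :: "real^'n \<Rightarrow> real"
    and w :: "real^'n \<Rightarrow> real^'n"
    and z uz :: "real^'n \<Rightarrow> real^'n"
    and Bm Bp :: "(real^'n) \<times> (real^'n) \<Rightarrow> real^'n^'n"
    and fs :: "(real^'n) \<times> (real^'n) \<Rightarrow> real^'n"
    and A :: "real^'n \<Rightarrow> real^'n^'n"
    and Phi :: "real \<Rightarrow> real^'n \<Rightarrow> real^'n \<Rightarrow> real^'n"
    and Dm Dp :: "real^'n \<Rightarrow> real^'n \<Rightarrow> real^'n"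
  assumes U_open: "open U"
    and f_C1: "C1_on U f"
    and B_cont: "continuous_on U B"
    and A_def: "A = (\<lambda>u. jac f u + B u)"
    and S_strict_convex: "strict_convex_on U S"
    and S_grad: "\<And>u. u \<in> U \<Longrightarrow> (S has_derivative (\<lambda>h. w u \<bullet> h)) (at u)"
    and S_C1: "C1_on U S" and w_C1: "C1_on U w"
    and q_flux: "\<And>u. u \<in> U \<Longrightarrow> (q has_derivative (\<lambda>h. w u \<bullet> (A u *v h))) (at u)"
    and Z_convex: "convex Z"
    and z_onto: "z ` U = Z"
    and uz_into: "uz ` Z \<subseteq> U"
    and uz_z: "\<And>u. u \<in> U \<Longrightarrow> uz (z u) = u"
    and z_uz: "\<And>y. y \<in> Z \<Longrightarrow> z (uz y) = y"
    and z_C1: "C1_on U z"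
    and uz_C1: "C1_on Z uz"
    and Phi_def: "Phi = (\<lambda>s uL uR. uz (z uL + s *\<^sub>R (z uR - z uL)))"
    and Bm_C1: "C1_on (U \<times> U) Bm"
    and Bp_C1: "C1_on (U \<times> U) Bp"
    and a_m: "\<And>u. u \<in> U \<Longrightarrow> (2::real) *\<^sub>R Bm (u, u) = B u ** jac uz (z u)"
    and a_p: "\<And>u. u \<in> U \<Longrightarrow> (2::real) *\<^sub>R Bp (u, u) = B u ** jac uz (z u)"
    and b: "\<And>uL uR. uL \<in> U \<Longrightarrow> uR \<in> U \<Longrightarrow> Bm (uR, uL) = Bp (uL, uR)"
    and c: "\<And>uL uR. uL \<in> U \<Longrightarrow> uR \<in> U \<Longrightarrow>
              Bm (uL, uR) + Bp (uL, uR) =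
              integral {0..1} (\<lambda>s. B (Phi s uL uR) ** jac uz (z uL + s *\<^sub>R (z uR - z uL)))"
    and fs_C1: "C1_on (U \<times> U) fs"
    and fs_consistent: "\<And>u. u \<in> U \<Longrightarrow> fs (u, u) = f u"
    and fs_symmetric: "\<And>uL uR. uL \<in> U \<Longrightarrow> uR \<in> U \<Longrightarrow> fs (uL, uR) = fs (uR, uL)"
    and d: "\<And>uL uR. uL \<in> U \<Longrightarrow> uR \<in> U \<Longrightarrow>
              (q uR - w uR \<bullet> f uR) - (q uL - w uL \<bullet> f uL) =
                w uR \<bullet> (Bp (uL, uR) *v (z uR - z uL))
              + w uL \<bullet> (Bm (uL, uR) *v (z uR - z uL))
              - (w uR - w uL) \<bullet> fs (uL, uR)"
    and Dm_def: "Dm = (\<lambda>uL uR. Bm (uL, uR) *v (z uR - z uL) + fs (uL, uR) - f uL)"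
    and Dp_def: "Dp = (\<lambda>uL uR. Bp (uL, uR) *v (z uR - z uL) + f uR - fs (uL, uR))"
  shows "(\<forall>u\<in>U. Dm u u = 0 \<and> Dp u u = 0)
       \<and> (\<forall>uL\<in>U. \<forall>uR\<in>U. Dm uL uR + Dp uL uR =
             integral {0..1} (\<lambda>s. A (Phi s uL uR) *v
                vector_derivative (\<lambda>t. Phi t uL uR) (at s within {0..1})))
       \<and> (\<forall>uL\<in>U. \<forall>uR\<in>U. Dm uL uR + Dp uR uL = 0)
       \<and> (\<forall>uL\<in>U. \<forall>uR\<in>U. w uL \<bullet> Dm uL uR + w uR \<bullet> Dp uL uR = q uR - q uL)
       \<and> (\<forall>uL\<in>U. ((\<lambda>uR. Dm uL uR) has_derivative (\<lambda>h. ((1/2::real) *\<^sub>R A uL) *v h)) (at uL))"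
  proof -
  obtain Fd where Fd: "\<And>x. x\<in>U \<Longrightarrow> (f has_derivative blinfun_apply (Fd x)) (at x)"
    using f_C1 unfolding C1_on_def by blast
  obtain Ud where Ud: "\<And>x. x\<in>Z \<Longrightarrow> (uz has_derivative blinfun_apply (Ud x)) (at x)"
    and Ud_cont: "continuous_on Z Ud"
    using uz_C1 unfolding C1_on_def by blast
  obtain Zd where Zd: "\<And>x. x\<in>U \<Longrightarrow> (z has_derivative blinfun_apply (Zd x)) (at x)"
    using z_C1 unfolding C1_on_def by blast
  obtain FSd where FSd: "\<And>x. x\<in>U\<times>U \<Longrightarrow> (fs has_derivative blinfun_apply (FSd x)) (at x)"
    using fs_C1 unfolding C1_on_def by blast
  obtain BMd where BMd: "\<And>x. x\<in>U\<times>U \<Longrightarrow> (Bm has_derivative blinfun_apply (BMd x)) (at x)"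
    using Bm_C1 unfolding C1_on_def by blast
  have jac_f: "jac f u = matrix (blinfun_apply (Fd u))" if "u \<in> U" for u
    unfolding jac_def using frechet_derivative_at[OF Fd[OF that]] by simp
  have jac_uz: "jac uz y = matrix (blinfun_apply (Ud y))" if "y \<in> Z" for y
    unfolding jac_def using frechet_derivative_at[OF Ud[OF that]] by simp
  have jac_z: "jac z u = matrix (blinfun_apply (Zd u))" if "u \<in> U" for u
    unfolding jac_def using frechet_derivative_at[OF Zd[OF that]] by simp
  have zU: "z u \<in> Z" if "u \<in> U" for u using z_onto that by blast
  have uzZ: "uz y \<in> U" if "y \<in> Z" for y using uz_into that by blast
  have C1: "\<forall>u\<in>U. Dm u u = 0 \<and> Dp u u = 0"
    by (simp add: Dm_def Dp_def fs_consistent)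
  have C3: "\<forall>uL\<in>U. \<forall>uR\<in>U. Dm uL uR + Dp uR uL = 0"
  proof (intro ballI)
    fix uL uR assume h: "uL \<in> U" "uR \<in> U"
    have "Bm (uL, uR) *v (z uR - z uL) + Bp (uR, uL) *v (z uL - z uR) = 0"
      using b[OF h(2) h(1)] by (simp add: matrix_vector_mult_diff_distrib)
    then show "Dm uL uR + Dp uR uL = 0"
      using fs_symmetric[OF h] unfolding Dm_def Dp_def by (simp add: algebra_simps)
  qed
  have C4: "\<forall>uL\<in>U. \<forall>uR\<in>U. w uL \<bullet> Dm uL uR + w uR \<bullet> Dp uL uR = q uR - q uL"
  proof (intro ballI)
    fix uL uR assume h: "uL \<in> U" "uR \<in> U"
    show "w uL \<bullet> Dm uL uR + w uR \<bullet> Dp uL uR = q uR - q uL"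
      using d[OF h] unfolding Dm_def Dp_def by (simp add: algebra_simps inner_diff_left inner_diff_right inner_add_right)
  qed
  have uz_cont: "continuous_on Z uz"
    by (intro continuous_at_imp_continuous_on ballI has_derivative_continuous[OF Ud])
  have jac_uz_cont: "continuous_on Z (jac uz)"
    using cont_matrix[OF Ud_cont] by (rule continuous_on_cong[THEN iffD1, rotated 2]) (auto simp: jac_uz)
  have C2: "\<forall>uL\<in>U. \<forall>uR\<in>U. Dm uL uR + Dp uL uR =
             integral {0..1} (\<lambda>s. A (Phi s uL uR) *v
                vector_derivative (\<lambda>t. Phi t uL uR) (at s within {0..1}))"
  proof (intro ballI)
    fix uL uR assume h: "uL \<in> U" "uR \<in> U"
    define dz where "dz = z uR - z uL"
    define g where "g = (\<lambda>s::real. z uL + s *\<^sub>R dz)"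
    have PhiE: "Phi s uL uR = uz (g s)" for s unfolding Phi_def g_def dz_def by simp
    have gZ: "g s \<in> Z" if "s \<in> {0..1}" for s
    proof -
      have "g s = (1 - s) *\<^sub>R z uL + s *\<^sub>R z uR" unfolding g_def dz_def by (simp add: algebra_simps)
      then show ?thesis using that convexD[OF Z_convex zU[OF h(1)] zU[OF h(2)], of "1 - s" s] by simp
    qed
    have PhiU: "uz (g s) \<in> U" if "s \<in> {0..1}" for s using uzZ[OF gZ[OF that]] .
    have g_cont: "continuous_on {0..1} g" unfolding g_def by (intro continuous_intros)
    have Phi_cont: "continuous_on {0..1} (\<lambda>s. uz (g s))"
      by (rule continuous_on_compose2[OF uz_cont g_cont]) (auto intro: gZ)
    have hvd: "((\<lambda>t. uz (g t)) has_vector_derivative Ud (g s) dz) (at s)" if "s \<in> {0..1}" for s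
    proof -
      have gd: "(g has_derivative (\<lambda>t. t *\<^sub>R dz)) (at s)" unfolding g_def by (auto intro!: derivative_eq_intros)
      have "((uz \<circ> g) has_derivative (Ud (g s) \<circ> (\<lambda>t. t *\<^sub>R dz))) (at s)"
        by (rule diff_chain_at[OF gd Ud[OF gZ[OF that]]])
      then show ?thesis unfolding has_vector_derivative_def by (simp add: comp_def blinfun.scaleR_right)
    qed
    have vd: "vector_derivative (\<lambda>t. Phi t uL uR) (at s within {0..1}) = Ud (g s) dz" if "s \<in> {0..1}" for s
      unfolding PhiE using vector_derivative_within_cbox[of 0 1 s "\<lambda>t. uz (g t)" "Ud (g s) dz"]
        has_vector_derivative_at_within[OF hvd[OF that]] that by simp
    have ftc: "((\<lambda>s. Fd (uz (g s)) (Ud (g s) dz)) has_integral f uR - f uL) {0..1}"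
    proof -
      have hv: "\<forall>x\<in>{0..1}. ((\<lambda>s. f (uz (g s))) has_vector_derivative Fd (uz (g x)) (Ud (g x) dz)) (at x within {0..1})"
      proof
        fix x :: real assume x: "x \<in> {0..1}"
        have "((f \<circ> (\<lambda>s. uz (g s))) has_vector_derivative Fd (uz (g x)) (Ud (g x) dz)) (at x within {0..1})"
          by (rule vector_derivative_diff_chain_within[OF has_vector_derivative_at_within[OF hvd[OF x]]])
             (rule has_derivative_at_withinI[OF Fd[OF PhiU[OF x]]])
        then show "((\<lambda>s. f (uz (g s))) has_vector_derivative Fd (uz (g x)) (Ud (g x) dz)) (at x within {0..1})"
          by (simp add: comp_def)
      qed
      have "((\<lambda>s. Fd (uz (g s)) (Ud (g s) dz)) has_integral f (uz (g 1)) - f (uz (g 0))) {0..1}"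
        using fundamental_theorem_of_calculus[of 0 1 "\<lambda>s. f (uz (g s))" "\<lambda>s. Fd (uz (g s)) (Ud (g s) dz)"] hv
        by simp
      moreover have "uz (g 1) = uR" "uz (g 0) = uL" unfolding g_def dz_def using uz_z h by auto
      ultimately show ?thesis by simp
    qed
    define M where "M = (\<lambda>s. B (uz (g s)) ** jac uz (g s))"
    have M_cont: "continuous_on {0..1} M"
      unfolding M_def
    proof (rule bounded_bilinear.continuous_on[OF bb_mm])
      show "continuous_on {0..1} (\<lambda>s. B (uz (g s)))"
        by (rule continuous_on_compose2[OF B_cont Phi_cont]) (auto intro: PhiU)
      show "continuous_on {0..1} (\<lambda>s. jac uz (g s))"
        by (rule continuous_on_compose2[OF jac_uz_cont g_cont]) (auto intro: gZ)
    qed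
    have Mint: "(M has_integral integral {0..1} M) {0..1}"
      using integrable_continuous_interval[OF M_cont] by (simp add: integrable_integral)
    have Mv: "((\<lambda>s. M s *v dz) has_integral (integral {0..1} M *v dz)) {0..1}"
      using has_integral_linear[OF Mint bounded_bilinear.bounded_linear_left[OF bb_mv, of dz]]
      by (simp add: comp_def)
    have cc: "integral {0..1} M = Bm (uL, uR) + Bp (uL, uR)"
      using c[OF h] unfolding M_def PhiE g_def dz_def by simp
    have sum: "((\<lambda>s. Fd (uz (g s)) (Ud (g s) dz) + M s *v dz) has_integral
        (f uR - f uL) + (Bm (uL, uR) + Bp (uL, uR)) *v dz) {0..1}"
      using has_integral_add[OF ftc Mv] cc by simp
    have integrand: "A (Phi s uL uR) *v vector_derivative (\<lambda>t. Phi t uL uR) (at s within {0..1})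
        = Fd (uz (g s)) (Ud (g s) dz) + M s *v dz" if "s \<in> {0..1}" for s
    proof -
      have "jac f (uz (g s)) *v (Ud (g s) dz) = Fd (uz (g s)) (Ud (g s) dz)"
        using jac_f[OF PhiU[OF that]] by (simp add: matrix_works blinfun.bounded_linear_right bounded_linear.linear)
      moreover have "jac uz (g s) *v dz = Ud (g s) dz"
        using jac_uz[OF gZ[OF that]] by (simp add: matrix_works blinfun.bounded_linear_right bounded_linear.linear)
      ultimately show ?thesis
        unfolding PhiE A_def M_def
        by (simp add: vd[OF that, unfolded PhiE] matrix_vector_mult_add_rdistrib matrix_vector_mul_assoc[symmetric])
    qed
    have "integral {0..1} (\<lambda>s. A (Phi s uL uR) *v vector_derivative (\<lambda>t. Phi t uL uR) (at s within {0..1}))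
        = integral {0..1} (\<lambda>s. Fd (uz (g s)) (Ud (g s) dz) + M s *v dz)"
      by (rule integral_cong) (use integrand in simp)
    also have "\<dots> = (f uR - f uL) + (Bm (uL, uR) + Bp (uL, uR)) *v dz"
      using sum by (rule integral_unique)
    finally show "Dm uL uR + Dp uL uR =
             integral {0..1} (\<lambda>s. A (Phi s uL uR) *v
                vector_derivative (\<lambda>t. Phi t uL uR) (at s within {0..1}))"
      unfolding Dm_def Dp_def dz_def by (simp add: matrix_vector_mult_add_rdistrib algebra_simps)
  qed
  have C5: "\<forall>uL\<in>U. ((\<lambda>uR. Dm uL uR) has_derivative (\<lambda>h. ((1/2::real) *\<^sub>R A uL) *v h)) (at uL)"
  proof
    fix u assume uU: "u \<in> U"
    have uu: "(u, u) \<in> U \<times> U" using uU by simp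
    define D where "D = blinfun_apply (FSd (u, u))"
    have Dlin: "linear D" unfolding D_def by (simp add: blinfun.bounded_linear_right bounded_linear.linear)
    have diag: "D (h, h) = Fd u h" for h
    proof -
      have "((fs \<circ> (\<lambda>x. (x, x))) has_derivative (D \<circ> (\<lambda>h. (h, h)))) (at u)"
        by (rule diff_chain_at) (auto intro!: derivative_eq_intros FSd[OF uu, unfolded D_def[symmetric]])
      then have "(f has_derivative (D \<circ> (\<lambda>h. (h, h)))) (at u)"
        by (rule has_derivative_transform_within_open[OF _ U_open uU]) (simp add: fs_consistent)
      from has_derivative_unique[OF this Fd[OF uU]] show ?thesis by (simp add: fun_eq_iff)
    qed
    have sym: "D (h, k) = D (k, h)" for h k
    proof -
      have "((fs \<circ> (\<lambda>p. (snd p, fst p))) has_derivative (D \<circ> (\<lambda>p. (snd p, fst p)))) (at (u, u))"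
        by (rule diff_chain_at) (auto intro!: derivative_eq_intros FSd[OF uu, unfolded D_def[symmetric]])
      then have "(fs has_derivative (D \<circ> (\<lambda>p. (snd p, fst p)))) (at (u, u))"
        by (rule has_derivative_transform_within_open[OF _ open_Times[OF U_open U_open] uu])
           (auto simp: fs_symmetric)
      from has_derivative_unique[OF this FSd[OF uu, unfolded D_def[symmetric]]] show ?thesis
        by (simp add: fun_eq_iff)
    qed
    have half: "D (0, h) = (1/2) *\<^sub>R Fd u h" for h
    proof -
      have "D (h, h) = D (h, 0) + D (0, h)"
        using linear_add[OF Dlin, of "(h,0)" "(0,h)"] by simp
      then show ?thesis using diag[of h] sym[of h 0] by (simp add: algebra_simps)
    qed
    have ident: "Ud (z u) (Zd u h) = h" for h
    proof -
      have "((uz \<circ> z) has_derivative (Ud (z u) \<circ> Zd u)) (at u)"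
        by (rule diff_chain_at[OF Zd[OF uU] Ud[OF zU[OF uU]]])
      then have "((\<lambda>x. x) has_derivative (Ud (z u) \<circ> Zd u)) (at u)"
        by (rule has_derivative_transform_within_open[OF _ U_open uU]) (simp add: uz_z)
      from has_derivative_unique[OF this has_derivative_ident] show ?thesis by (simp add: fun_eq_iff)
    qed
    have dfs: "((\<lambda>x. fs (u, x)) has_derivative (\<lambda>h. D (0, h))) (at u)"
    proof -
      have "((fs \<circ> (\<lambda>x. (u, x))) has_derivative (D \<circ> (\<lambda>h. (0, h)))) (at u)"
        by (rule diff_chain_at) (auto intro!: derivative_eq_intros FSd[OF uu, unfolded D_def[symmetric]])
      then show ?thesis by (simp add: comp_def)
    qed
    define E where "E = blinfun_apply (BMd (u, u))"
    have dBm: "((\<lambda>x. Bm (u, x)) has_derivative (\<lambda>h. E (0, h))) (at u)"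
    proof -
      have "((Bm \<circ> (\<lambda>x. (u, x))) has_derivative (E \<circ> (\<lambda>h. (0, h)))) (at u)"
        by (rule diff_chain_at) (auto intro!: derivative_eq_intros BMd[OF uu, unfolded E_def[symmetric]])
      then show ?thesis by (simp add: comp_def)
    qed
    have dz: "((\<lambda>x. z x - z u) has_derivative (\<lambda>h. Zd u h)) (at u)"
      using Zd[OF uU] by (auto intro!: derivative_eq_intros)
    have dprod: "((\<lambda>x. Bm (u, x) *v (z x - z u)) has_derivative
        (\<lambda>h. Bm (u, u) *v Zd u h + E (0, h) *v (z u - z u))) (at u)"
      using bounded_bilinear.FDERIV[OF bb_mv dBm dz] by simp
    have all: "((\<lambda>x. Bm (u, x) *v (z x - z u) + fs (u, x) - f u) has_derivative
        (\<lambda>h. Bm (u, u) *v Zd u h + E (0, h) *v (z u - z u) + D (0, h) - 0)) (at u)"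
      by (intro has_derivative_diff has_derivative_add dprod dfs has_derivative_const)
    have eq: "Bm (u, u) *v Zd u h + E (0, h) *v (z u - z u) + D (0, h) - 0
       = ((1/2::real) *\<^sub>R A u) *v h" for h
    proof -
      have "Bm (u, u) = (1/2::real) *\<^sub>R (B u ** jac uz (z u))"
        using arg_cong[OF a_m[OF uU], of "scaleR (1/2)"] by simp
      then have "Bm (u, u) *v Zd u h = (1/2::real) *\<^sub>R (B u *v h)"
        using ident[of h] jac_uz[OF zU[OF uU]]
        by (simp add: scaleR_matrix_vector_assoc[symmetric] matrix_vector_mul_assoc[symmetric]
             matrix_works blinfun.bounded_linear_right bounded_linear.linear)
      moreover have "jac f u *v h = Fd u h"
        using jac_f[OF uU] by (simp add: matrix_works blinfun.bounded_linear_right bounded_linear.linear)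
      ultimately show ?thesis
        by (simp add: half A_def scaleR_matrix_vector_assoc[symmetric] matrix_vector_mult_add_rdistrib algebra_simps)
    qed
    show "((\<lambda>uR. Dm u uR) has_derivative (\<lambda>h. ((1/2::real) *\<^sub>R A u) *v h)) (at u)"
      using all unfolding Dm_def eq by simp
  qed
  show ?thesis using C1 C2 C3 C4 C5 by blast
qed

end
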